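(* Let $\Gamma$ be an extended Dynkin graph with vertex set $I$ and standard integral generalized Cartan matrix $C$, let $W$ be the associated affine Weyl group, and let $v\in\mathbb{R}^I$ be a configuration with $\delta\cdot v=0$ (the case in which the numbers game loops). Then for every $g\in W$ there is a finite sequence of legal moves of the numbers game taking $v$ to $g v$. In particular, from any configuration reached from $v$ by playing the numbers game, one can always return to the initial configuration $v$ by playing the numbers game.
   Context: $\Gamma$ is the Dynkin diagram of an affine Weyl group (types $\widetilde{A_n},\widetilde{B_n},\widetilde{C_n},\widetilde{D_n},\widetilde{E_6},\widetilde{E_7},\widetilde{E_8},\widetilde{F_4},\widetilde{G_2}$), with vertex set $I$ and standard integral generalized Cartan matrix $C=(c_{ij})_{i,j\in I}$ ($c_{ii}=2$, $c_{ij}\le 0$ for $i\neq j$, $c_{ij}=0$ iff $i,j$ are not adjacent). Configurations are vectors $v\in\mathbb{R}^I$ (entries are called amplitudes). For $i\in I$ let $f_i:\mathbb{R}^I\to\mathbb{R}^I$ be the linear map $f_i(v)_i=-v_i$, $f_i(v)_j=v_j-c_{ij}v_i$ if $j$ is adjacent to $i$, and $f_i(v)_j=v_j$ otherwise; the simple reflection $s_i$ of $W$ acts on $\mathbb{R}^I$ by $f_i$. A legal move of the numbers game (firing vertex $i$) is allowed from $v$ only if $v_i<0$, and replaces $v$ by $f_i(v)$. Let $\alpha^{(i)}$, $i\in I$, be the standard basis of $\mathbb{Z}^I$ (simple roots), with Cartan form $\langle\alpha^{(i)},\alpha^{(j)}\rangle=c_{ij}$; $W$ acts on $\mathbb{Z}^I$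 by $s_i\alpha=\alpha-\langle\alpha,\alpha^{(i)}\rangle\alpha^{(i)}$, and the roots $\Delta$ are the $W$-orbit of the simple roots. A vertex $i$ is extending if $\Gamma\setminus\{i\}$ is a Dynkin graph whose extended Dynkin graph is $\Gamma$ with $i$ as extending vertex. $\delta\in\mathbb{Z}_{\ge0}^I$ is the unique vector with $\delta_i=1$ at all extending vertices and $\langle\delta,\alpha\rangle=0$ for all $\alpha\in\Delta$; $\delta\cdot v=\sum_i\delta_iv_i$ is the usual dot product. *)

theory Defs
  imports Complex_Main
begin

text \<open>The index n of the classical types is the rank of the
underlying finite Dynkin diagram; the vertex set is {0..n}, vertex 0 being the
(standard) extending vertex.\<close>

datatype affine_type = TA nat | TB nat | TC nat | TD nat | TE6 | TE7 | TE8 | TF4 | TG2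

fun valid_type :: "affine_type \<Rightarrow> bool" where
  "valid_type (TA n) = (n \<ge> 1)"
| "valid_type (TB n) = (n \<ge> 3)"
| "valid_type (TC n) = (n \<ge> 2)"
| "valid_type (TD n) = (n \<ge> 4)"
| "valid_type _ = True"

fun rank :: "affine_type \<Rightarrow> nat" where
  "rank (TA n) = n"
| "rank (TB n) = n"
| "rank (TC n) = n"
| "rank (TD n) = n"
| "rank TE6 = 6"
| "rank TE7 = 7"
| "rank TE8 = 8"
| "rank TF4 = 4"
| "rank TG2 = 2"

definition vertices :: "affine_type \<Rightarrow> nat set" where
  "vertices T = {0..rank T}"

definition simple_edge :: "(nat \<times> nat) set \<Rightarrow> nat \<Rightarrow> nat \<Rightarrow> int" where
  "simple_edge E i j = (if (i, j) \<in> E \<or> (j, i) \<in> E then -1 else 0)"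

text \<open>Kac's generalized Cartan matrix a_ij = <alpha_i^vee, alpha_j> of the untwisted
affine algebra X_n^(1) (Kac, Infinite dimensional Lie algebras, Table Aff 1),
off-diagonal part, for distinct vertices i, j.\<close>
fun kac_off :: "affine_type \<Rightarrow> nat \<Rightarrow> nat \<Rightarrow> int" where
  "kac_off (TA n) i j =
     (if n = 1 then -2
      else if j = Suc i mod (n + 1) \<or> i = Suc j mod (n + 1) then -1 else 0)"
| "kac_off (TB n) i j =
     (if i = n \<and> j = n - 1 then -2
      else if i = n - 1 \<and> j = n then -1
      else simple_edge ({(0, 2)} \<union> {(k, k + 1) | k. 1 \<le> k \<and> k + 2 \<le> n}) i j)"
| "kac_off (TC n) i j =
     (if i = 1 \<and> j = 0 then -2
      else if i = n - 1 \<and> j = n then -2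
      else simple_edge {(k, k + 1) | k. k + 1 \<le> n} i j)"
| "kac_off (TD n) i j =
     simple_edge ({(0, 2), (n - 2, n)} \<union> {(k, k + 1) | k. 1 \<le> k \<and> k + 2 \<le> n}) i j"
| "kac_off TE6 i j = simple_edge {(0, 2), (2, 4), (1, 3), (3, 4), (4, 5), (5, 6)} i j"
| "kac_off TE7 i j = simple_edge {(0, 1), (2, 4), (1, 3), (3, 4), (4, 5), (5, 6), (6, 7)} i j"
| "kac_off TE8 i j =
     simple_edge {(8, 0), (2, 4), (1, 3), (3, 4), (4, 5), (5, 6), (6, 7), (7, 8)} i j"
| "kac_off TF4 i j =
     (if i = 3 \<and> j = 2 then -2
      else if i = 2 \<and> j = 3 then -1
      else simple_edge {(0, 1), (1, 2), (3, 4)} i j)"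
| "kac_off TG2 i j =
     (if i = 1 \<and> j = 2 then -3
      else if i = 2 \<and> j = 1 then -1
      else simple_edge {(0, 2)} i j)"

definition kac :: "affine_type \<Rightarrow> nat \<Rightarrow> nat \<Rightarrow> int" where
  "kac T i j =
     (if i \<notin> vertices T \<or> j \<notin> vertices T then 0
      else if i = j then 2 else kac_off T i j)"

text \<open>The standard integral generalized Cartan matrix C = (c_ij) used in the paper,
with Cartan form <alpha^(i), alpha^(j)> = c_ij and
s_i alpha = alpha - <alpha, alpha^(i)> alpha^(i); so that s_i alpha^(j) = alpha^(j) - c_ji alpha^(i)
agrees with Kac's s_i alpha_j = alpha_j - a_ij alpha_i, i.e. c_ij = a_ji.\<close>
definition cartan :: "affine_type \<Rightarrow> nat \<Rightarrow> nat \<Rightarrow> int" where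
  "cartan T i j = kac T j i"

text \<open>Configurations are real vectors indexed by I (represented as functions on nat;
coordinates outside I are never touched).  The linear map f_i.\<close>
definition fire :: "affine_type \<Rightarrow> nat \<Rightarrow> (nat \<Rightarrow> real) \<Rightarrow> (nat \<Rightarrow> real)" where
  "fire T i v = (\<lambda>j. if j = i then - v i
                     else if j \<in> vertices T then v j - of_int (cartan T i j) * v i
                     else v j)"

definition legal_move :: "affine_type \<Rightarrow> (nat \<Rightarrow> real) \<Rightarrow> (nat \<Rightarrow> real) \<Rightarrow> bool" where
  "legal_move T v w \<longleftrightarrow> (\<exists>i \<in> vertices T. v i < 0 \<and> w = fire T i v)"

abbreviation game_reach :: "affine_type \<Rightarrow> (nat \<Rightarrow> real) \<Rightarrow> (nat \<Rightarrow> real) \<Rightarrow> bool" where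
  "game_reach T \<equiv> (legal_move T)\<^sup>*\<^sup>*"

text \<open>Action of the Weyl group element represented by the word s_{i_1} ... s_{i_k}.\<close>
definition weyl_act :: "affine_type \<Rightarrow> nat list \<Rightarrow> (nat \<Rightarrow> real) \<Rightarrow> (nat \<Rightarrow> real)" where
  "weyl_act T g v = foldr (fire T) g v"

definition simple_root :: "nat \<Rightarrow> nat \<Rightarrow> int" where
  "simple_root i = (\<lambda>j. if j = i then 1 else 0)"

definition cartan_form :: "affine_type \<Rightarrow> (nat \<Rightarrow> int) \<Rightarrow> (nat \<Rightarrow> int) \<Rightarrow> int" where
  "cartan_form T x y = (\<Sum>i \<in> vertices T. \<Sum>j \<in> vertices T. x i * cartan T i j * y j)"

definition refl :: "affine_type \<Rightarrow> nat \<Rightarrow> (nat \<Rightarrow> int) \<Rightarrow> (nat \<Rightarrow> int)" where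
  "refl T i a = (\<lambda>j. a j - cartan_form T a (simple_root i) * simple_root i j)"

inductive_set roots :: "affine_type \<Rightarrow> (nat \<Rightarrow> int) set" for T where
  simple: "i \<in> vertices T \<Longrightarrow> simple_root i \<in> roots T"
| reflect: "a \<in> roots T \<Longrightarrow> i \<in> vertices T \<Longrightarrow> refl T i a \<in> roots T"

definition diagram_aut :: "affine_type \<Rightarrow> (nat \<Rightarrow> nat) \<Rightarrow> bool" where
  "diagram_aut T \<sigma> \<longleftrightarrow> bij_betw \<sigma> (vertices T) (vertices T) \<and>
     (\<forall>i \<in> vertices T. \<forall>j \<in> vertices T. cartan T (\<sigma> i) (\<sigma> j) = cartan T i j)"

text \<open>Extending vertices: images of the standard extending vertex 0 under diagram
automorphisms (exactly the vertices i such that Gamma minus i is a Dynkin graph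
whose extension is Gamma with i as extending vertex).\<close>
definition extending :: "affine_type \<Rightarrow> nat set" where
  "extending T = {\<sigma> 0 | \<sigma>. diagram_aut T \<sigma>}"

definition delta :: "affine_type \<Rightarrow> nat \<Rightarrow> int" where
  "delta T = (THE d. (\<forall>i \<in> vertices T. 0 \<le> d i) \<and> (\<forall>i. i \<notin> vertices T \<longrightarrow> d i = 0)
                    \<and> (\<forall>i \<in> extending T. d i = 1)
                    \<and> (\<forall>a \<in> roots T. cartan_form T a d = 0))"

definition delta_dot :: "affine_type \<Rightarrow> (nat \<Rightarrow> real) \<Rightarrow> real" where
  "delta_dot T v = (\<Sum>i \<in> vertices T. of_int (delta T i) * v i)"

end

theory Submission
  imports Defs "HOL-Library.FuncSet" "Jordan_Normal_Form.Determinant"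
begin


lemma finite_V[simp]: "finite (vertices T)" by (simp add: vertices_def)
lemma zero_V[simp]: "0 \<in> vertices T" by (simp add: vertices_def)

lemma cartan_out: "i \<notin> vertices T \<or> j \<notin> vertices T \<Longrightarrow> cartan T i j = 0"
  by (auto simp: cartan_def kac_def)
lemma cartan_diag: "i \<in> vertices T \<Longrightarrow> cartan T i i = 2"
  by (simp add: cartan_def kac_def)

lemma fire_alt: "i \<in> vertices T \<Longrightarrow>
  fire T i v = (\<lambda>j. if j \<in> vertices T then v j - of_int (cartan T i j) * v i else v j)"
  by (auto simp: fire_def cartan_diag)

lemma fire_i: "i \<in> vertices T \<Longrightarrow> fire T i v i = - v i"
  by (simp add: fire_def)

lemma fire_invol: "i \<in> vertices T \<Longrightarrow> fire T i (fire T i v) = v"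
  by (rule ext) (simp add: fire_alt cartan_diag algebra_simps)

lemma weyl_rev: "set g \<subseteq> vertices T \<Longrightarrow> weyl_act T (rev g) (weyl_act T g v) = v"
  by (induction g arbitrary: v) (auto simp: weyl_act_def fire_invol)

locale good =
  fixes T :: affine_type and dI :: "nat \<Rightarrow> int" and \<eta> :: "nat \<Rightarrow> real"
  assumes offdiag: "\<And>i j. i \<in> vertices T \<Longrightarrow> j \<in> vertices T \<Longrightarrow> i \<noteq> j \<Longrightarrow> cartan T i j \<le> 0"
    and eta_pos: "\<And>i. i \<in> vertices T \<Longrightarrow> \<eta> i > 0"
    and sym: "\<And>i k. i \<in> vertices T \<Longrightarrow> k \<in> vertices T \<Longrightarrow>
                 \<eta> k * of_int (cartan T i k) = \<eta> i * of_int (cartan T k i)"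
    and d_pos: "\<And>i. i \<in> vertices T \<Longrightarrow> dI i > 0"
    and d0: "dI 0 = 1"
    and null: "\<And>i. i \<in> vertices T \<Longrightarrow> (\<Sum>j\<in>vertices T. cartan T i j * dI j) = 0"
    and conn: "\<And>i. i \<in> vertices T \<Longrightarrow>
       (\<lambda>a b. a \<in> vertices T \<and> b \<in> vertices T \<and> cartan T a b \<noteq> 0)\<^sup>*\<^sup>* 0 i"
begin

abbreviation "V \<equiv> vertices T"
definition c :: "nat \<Rightarrow> nat \<Rightarrow> real" where "c i j = of_int (cartan T i j)"
definition d :: "nat \<Rightarrow> real" where "d i = of_int (dI i)"
definition p :: "nat \<Rightarrow> real" where "p i = d i / \<eta> i"
definition L :: "(nat \<Rightarrow> real) \<Rightarrow> nat \<Rightarrow> real" where "L x k = (\<Sum>i\<in>V. x i * c i k)"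
definition q :: "(nat \<Rightarrow> real) \<Rightarrow> real" where "q x = (\<Sum>b\<in>V. \<eta> b * x b * L x b)"

lemma dpos: "i \<in> V \<Longrightarrow> d i > 0" using d_pos by (simp add: d_def)
lemma ppos: "i \<in> V \<Longrightarrow> p i > 0" using dpos eta_pos by (simp add: p_def)
lemma csym: "i \<in> V \<Longrightarrow> k \<in> V \<Longrightarrow> \<eta> k * c i k = \<eta> i * c k i" using sym by (simp add: c_def)
lemma cnull: "i \<in> V \<Longrightarrow> (\<Sum>j\<in>V. c i j * d j) = 0"
proof -
  assume "i \<in> V"
  have "(\<Sum>j\<in>V. c i j * d j) = of_int (\<Sum>j\<in>V. cartan T i j * dI j)"
    by (simp add: c_def d_def)
  thus ?thesis using null[OF \<open>i\<in>V\<close>] by simp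
qed
lemma cdiag: "i \<in> V \<Longrightarrow> c i i = 2" by (simp add: c_def cartan_diag)
lemma coff: "i \<in> V \<Longrightarrow> k \<in> V \<Longrightarrow> i \<noteq> k \<Longrightarrow> c i k \<le> 0" using offdiag by (simp add: c_def)

lemma Gp_row: "i \<in> V \<Longrightarrow> (\<Sum>k\<in>V. \<eta> k * c i k * p k) = 0"
proof -
  assume i: "i \<in> V"
  have "(\<Sum>k\<in>V. \<eta> k * c i k * p k) = (\<Sum>k\<in>V. c i k * d k)"
  proof (rule sum.cong)
    fix k assume "k \<in> V"
    thus "\<eta> k * c i k * p k = c i k * d k" using eta_pos[of k] by (simp add: p_def)
  qed simp
  thus ?thesis using cnull[OF i] by simp
qed

lemma Gp_col: "k \<in> V \<Longrightarrow> (\<Sum>i\<in>V. \<eta> k * c i k * p i) = 0"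
proof -
  assume k: "k \<in> V"
  have "(\<Sum>i\<in>V. \<eta> k * c i k * p i) = (\<Sum>i\<in>V. c k i * d i)"
  proof (rule sum.cong)
    fix i assume i: "i \<in> V"
    have "\<eta> k * c i k * p i = \<eta> i * c k i * (d i / \<eta> i)" using csym[OF i k] by (simp add: p_def)
    also have "\<dots> = c k i * d i" using eta_pos[OF i] by simp
    finally show "\<eta> k * c i k * p i = c k i * d i" .
  qed simp
  thus ?thesis using cnull[OF k] by simp
qed

lemma q_alt: "q x = (\<Sum>i\<in>V. \<Sum>k\<in>V. x i * (\<eta> k * c i k) * x k)"
  unfolding q_def L_def
  by (subst sum.swap) (simp add: sum_distrib_left sum_distrib_right mult_ac)

lemma q_pairs: "q x = -(1/2) * (\<Sum>i\<in>V. \<Sum>k\<in>V. \<eta> k * c i k * p i * p k * (x i / p i - x k / p k)^2)"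
proof -
  let ?G = "\<lambda>i k. \<eta> k * c i k"
  have e: "?G i k * p i * p k * (x i / p i - x k / p k)^2
      = (x i ^ 2 / p i) * (?G i k * p k) + (x k ^ 2 / p k) * (?G i k * p i) - 2 * (x i * ?G i k * x k)"
    if "i \<in> V" "k \<in> V" for i k
    using ppos[OF that(1)] ppos[OF that(2)] by (simp add: power2_eq_square field_simps)
  have "(\<Sum>i\<in>V. \<Sum>k\<in>V. ?G i k * p i * p k * (x i / p i - x k / p k)^2)
      = (\<Sum>i\<in>V. \<Sum>k\<in>V. (x i ^ 2 / p i) * (?G i k * p k))
        + (\<Sum>i\<in>V. \<Sum>k\<in>V. (x k ^ 2 / p k) * (?G i k * p i))
        - 2 * (\<Sum>i\<in>V. \<Sum>k\<in>V. x i * ?G i k * x k)"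
    by (simp add: e sum.distrib sum_subtractf sum_distrib_left)
  also have "(\<Sum>i\<in>V. \<Sum>k\<in>V. (x i ^ 2 / p i) * (?G i k * p k)) = (\<Sum>i\<in>V. (x i ^ 2 / p i) * (\<Sum>k\<in>V. ?G i k * p k))"
    by (simp add: sum_distrib_left)
  also have "\<dots> = 0" by (simp add: Gp_row)
  also have "(\<Sum>i\<in>V. \<Sum>k\<in>V. (x k ^ 2 / p k) * (?G i k * p i)) = (\<Sum>k\<in>V. (x k ^ 2 / p k) * (\<Sum>i\<in>V. ?G i k * p i))"
    by (subst sum.swap) (simp add: sum_distrib_left)
  also have "\<dots> = 0" by (simp add: Gp_col)
  finally show ?thesis by (simp add: q_alt)
qed

lemma term_nonneg: "i \<in> V \<Longrightarrow> k \<in> V \<Longrightarrow> 0 \<le> - (\<eta> k * c i k * p i * p k * (x i / p i - x k / p k)^2)"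
proof -
  assume i: "i \<in> V" and k: "k \<in> V"
  show ?thesis
  proof (cases "i = k")
    case False
    have "\<eta> k * c i k * p i * p k \<le> 0"
      using coff[OF i k False] eta_pos[OF k] ppos[OF i] ppos[OF k]
      by (simp add: mult_nonneg_nonpos mult_nonpos_nonneg)
    thus ?thesis by (simp add: mult_nonpos_nonneg)
  qed simp
qed

lemma q_nonneg: "0 \<le> q x"
proof -
  have "0 \<le> (\<Sum>i\<in>V. \<Sum>k\<in>V. - (\<eta> k * c i k * p i * p k * (x i / p i - x k / p k)^2))"
    by (intro sum_nonneg term_nonneg)
  thus ?thesis by (simp add: q_pairs sum_negf)
qed

lemma edge_bound:
  assumes i: "i \<in> V" and k: "k \<in> V" and ik: "i \<noteq> k" and cik: "c i k \<noteq> 0" and qx: "q x \<le> B"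
  shows "\<bar>x i / p i - x k / p k\<bar> \<le> sqrt (2 / (- (\<eta> k * c i k * p i * p k))) * sqrt B"
proof -
  let ?t = "\<lambda>i k. - (\<eta> k * c i k * p i * p k * (x i / p i - x k / p k)^2)"
  have "?t i k \<le> (\<Sum>k'\<in>V. ?t i k')"
    by (rule member_le_sum) (use term_nonneg i k in auto)
  also have "\<dots> \<le> (\<Sum>i'\<in>V. \<Sum>k'\<in>V. ?t i' k')"
    by (rule member_le_sum[where f = "\<lambda>i'. \<Sum>k'\<in>V. ?t i' k'"]) (use term_nonneg i in \<open>auto intro: sum_nonneg\<close>)
  also have "\<dots> = 2 * q x" by (simp add: q_pairs sum_negf)
  finally have t: "?t i k \<le> 2 * B" using qx by simp
  have neg: "\<eta> k * c i k * p i * p k < 0"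
  proof -
    have "c i k < 0" using coff[OF i k ik] cik by simp
    thus ?thesis using eta_pos[OF k] ppos[OF i] ppos[OF k]
      by (simp add: mult_pos_neg mult_neg_pos)
  qed
  let ?g = "- (\<eta> k * c i k * p i * p k)"
  have gpos: "?g > 0" using neg by simp
  have "(x i / p i - x k / p k)^2 \<le> 2 * B / ?g"
    using t gpos by (simp add: field_simps)
  hence "sqrt ((x i / p i - x k / p k)^2) \<le> sqrt (2 * B / ?g)" by (rule real_sqrt_le_mono)
  thus ?thesis by (simp add: real_sqrt_mult[symmetric] mult.commute)
qed

lemma path_bound:
  assumes "(\<lambda>a b. a \<in> V \<and> b \<in> V \<and> cartan T a b \<noteq> 0)\<^sup>*\<^sup>* 0 i"
  shows "\<exists>K\<ge>0. \<forall>x B. q x \<le> B \<longrightarrow> \<bar>x i / p i - x 0 / p 0\<bar> \<le> K * sqrt B"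
  using assms
proof (induction rule: rtranclp_induct)
  case base
  show ?case by (intro exI[of _ 0]) auto
next
  case (step b k)
  then obtain K where K: "K \<ge> 0" "\<forall>x B. q x \<le> B \<longrightarrow> \<bar>x b / p b - x 0 / p 0\<bar> \<le> K * sqrt B" by blast
  from step have b: "b \<in> V" and k: "k \<in> V" and cbk: "c b k \<noteq> 0" by (auto simp: c_def)
  show ?case
  proof (cases "b = k")
    case True thus ?thesis using K by blast
  next
    case False
    let ?K = "K + \<bar>sqrt (2 / (- (\<eta> k * c b k * p b * p k)))\<bar>"
    show ?thesis
    proof (intro exI conjI allI impI)
      show "0 \<le> ?K" using K(1) by simp
      fix x B assume qx: "q x \<le> B"
      have "\<bar>x b / p b - x k / p k\<bar> \<le> sqrt (2 / (- (\<eta> k * c b k * p b * p k))) * sqrt B"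
        by (rule edge_bound[OF b k False cbk qx])
      moreover have "\<bar>x b / p b - x 0 / p 0\<bar> \<le> K * sqrt B" using K qx by blast
      moreover have "sqrt (2 / (- (\<eta> k * c b k * p b * p k))) * sqrt B \<le> \<bar>sqrt (2 / (- (\<eta> k * c b k * p b * p k)))\<bar> * sqrt B"
        by (rule mult_right_mono) (use q_nonneg[of x] qx in auto)
      ultimately show "\<bar>x k / p k - x 0 / p 0\<bar> \<le> ?K * sqrt B"
        by (simp add: distrib_right)
    qed
  qed
qed

lemma V_bound: "\<exists>K\<ge>0. \<forall>x B i. i \<in> V \<longrightarrow> q x \<le> B \<longrightarrow> \<bar>x i / p i - x 0 / p 0\<bar> \<le> K * sqrt B"
proof -
  have "\<forall>i\<in>V. \<exists>K. K \<ge> 0 \<and> (\<forall>x B. q x \<le> B \<longrightarrow> \<bar>x i / p i - x 0 / p 0\<bar> \<le> K * sqrt B)"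
    using path_bound conn by blast
  then obtain Kf where Kf: "\<forall>i\<in>V. Kf i \<ge> 0 \<and> (\<forall>x B. q x \<le> B \<longrightarrow> \<bar>x i / p i - x 0 / p 0\<bar> \<le> Kf i * sqrt B)"
    by metis
  show ?thesis
  proof (intro exI[of _ "\<Sum>i\<in>V. Kf i"] conjI allI impI)
    show "0 \<le> (\<Sum>i\<in>V. Kf i)" using Kf by (simp add: sum_nonneg)
    fix x B i assume i: "i \<in> V" and qx: "q x \<le> B"
    have B: "0 \<le> B" using q_nonneg[of x] qx by simp
    have "Kf i \<le> (\<Sum>i\<in>V. Kf i)" by (rule member_le_sum) (use Kf i in auto)
    hence "Kf i * sqrt B \<le> (\<Sum>i\<in>V. Kf i) * sqrt B" using B by (simp add: mult_right_mono)
    thus "\<bar>x i / p i - x 0 / p 0\<bar> \<le> (\<Sum>i\<in>V. Kf i) * sqrt B" using Kf i qx by force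
  qed
qed

lemma q_zero_const: "q x \<le> 0 \<Longrightarrow> i \<in> V \<Longrightarrow> x i / p i = x 0 / p 0"
  using V_bound by force

end

context good
begin

lemma c_out: "i \<notin> V \<or> k \<notin> V \<Longrightarrow> c i k = 0" by (simp add: c_def cartan_out)

lemma L_out: "k \<notin> V \<Longrightarrow> L x k = 0" by (simp add: L_def c_out)

lemma Lp: "k \<in> V \<Longrightarrow> L p k = 0"
proof -
  assume k: "k \<in> V"
  have "\<eta> k * L p k = (\<Sum>i\<in>V. \<eta> k * c i k * p i)" by (simp add: L_def sum_distrib_left mult_ac)
  thus ?thesis using Gp_col[OF k] eta_pos[OF k] by simp
qed

lemma kernel_unique:
  assumes y: "\<forall>i\<in>V. (\<Sum>j\<in>V. c i j * y j) = 0" and i: "i \<in> V"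
  shows "y i = y 0 * d i"
proof -
  define z where "z j = y j / \<eta> j" for j
  have Lz: "L z b = 0" if b: "b \<in> V" for b
  proof -
    have "\<eta> b * L z b = (\<Sum>j\<in>V. c b j * y j)"
      unfolding L_def sum_distrib_left
    proof (rule sum.cong)
      fix j assume j: "j \<in> V"
      have "\<eta> b * (z j * c j b) = (\<eta> b * c j b) * y j / \<eta> j" by (simp add: z_def)
      also have "\<dots> = \<eta> j * c b j * y j / \<eta> j" using csym[OF j b] by simp
      also have "\<dots> = c b j * y j" using eta_pos[OF j] by simp
      finally show "\<eta> b * (z j * c j b) = c b j * y j" .
    qed simp
    thus ?thesis using y b eta_pos[OF b] by simp
  qed
  have "q z = 0" unfolding q_def by (simp add: Lz)
  hence "z i / p i = z 0 / p 0" using i by (intro q_zero_const) simp_all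
  moreover have "z i / p i = y i / d i" using eta_pos[OF i] by (simp add: z_def p_def)
  moreover have "z 0 / p 0 = y 0" using eta_pos[of 0] d0 by (simp add: z_def p_def d_def)
  ultimately show ?thesis using dpos[OF i] by (simp add: field_simps)
qed

definition cand :: "nat \<Rightarrow> int" where "cand i = (if i \<in> V then dI i else 0)"

lemma cform_simple: "k \<in> V \<Longrightarrow> cartan_form T (simple_root k) y = (\<Sum>j\<in>V. cartan T k j * y j)"
proof -
  assume k: "k \<in> V"
  have "cartan_form T (simple_root k) y = (\<Sum>i\<in>V. simple_root k i * (\<Sum>j\<in>V. cartan T i j * y j))"
    by (simp add: cartan_form_def sum_distrib_left mult_ac)
  also have "\<dots> = (\<Sum>j\<in>V. cartan T k j * y j)"
    using k by (simp add: simple_root_def if_distrib[of "\<lambda>z. z * _"] cong: if_cong)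
  finally show ?thesis .
qed

lemma id_aut: "diagram_aut T id" unfolding diagram_aut_def by (simp add: bij_betw_id)
lemma zero_ext: "0 \<in> extending T"
proof -
  have "0 = id 0 \<and> diagram_aut T id" using id_aut by simp
  thus ?thesis unfolding extending_def by blast
qed

lemma delta_eq: "delta T = cand"
  unfolding delta_def
proof (rule the_equality)
  show "(\<forall>i\<in>V. 0 \<le> cand i) \<and> (\<forall>i. i \<notin> V \<longrightarrow> cand i = 0) \<and>
    (\<forall>i\<in>extending T. cand i = 1) \<and> (\<forall>a\<in>roots T. cartan_form T a cand = 0)"
  proof (intro conjI ballI allI impI)
    fix i assume "i \<in> V" thus "0 \<le> cand i" using d_pos[of i] by (simp add: cand_def)
  next
    fix i assume "i \<notin> V" thus "cand i = 0" by (simp add: cand_def)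
  next
    fix a
    have "cartan_form T a cand = (\<Sum>i\<in>V. a i * (\<Sum>j\<in>V. cartan T i j * dI j))"
      unfolding cartan_form_def
      by (intro sum.cong refl) (simp add: cand_def sum_distrib_left mult_ac)
    thus "cartan_form T a cand = 0" by (simp add: null)
  next
    fix i assume "i \<in> extending T"
    then obtain \<sigma> where i: "i = \<sigma> 0" and aut: "diagram_aut T \<sigma>" by (auto simp: extending_def)
    have bij: "bij_betw \<sigma> V V" and pres: "\<And>a b. a \<in> V \<Longrightarrow> b \<in> V \<Longrightarrow> cartan T (\<sigma> a) (\<sigma> b) = cartan T a b"
      using aut by (auto simp: diagram_aut_def)
    have sV: "\<And>a. a \<in> V \<Longrightarrow> \<sigma> a \<in> V" using bij by (auto simp: bij_betw_def)
    have ker: "\<forall>k\<in>V. (\<Sum>j\<in>V. c k j * d (\<sigma> j)) = 0"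
    proof
      fix k assume k: "k \<in> V"
      have "(\<Sum>j\<in>V. c k j * d (\<sigma> j)) = (\<Sum>j\<in>V. c (\<sigma> k) (\<sigma> j) * d (\<sigma> j))"
        by (intro sum.cong refl) (simp add: c_def pres k)
      also have "\<dots> = (\<Sum>j\<in>V. c (\<sigma> k) j * d j)"
        using sum.reindex_bij_betw[OF bij, of "\<lambda>j. c (\<sigma> k) j * d j"] by simp
      also have "\<dots> = 0" using cnull sV k by simp
      finally show "(\<Sum>j\<in>V. c k j * d (\<sigma> j)) = 0" .
    qed
    have e: "d (\<sigma> j) = d (\<sigma> 0) * d j" if "j \<in> V" for j
      using kernel_unique[where y = "\<lambda>j. d (\<sigma> j)", OF ker that] by simp
    have "(\<Sum>j\<in>V. d j) = (\<Sum>j\<in>V. d (\<sigma> j))"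
      using sum.reindex_bij_betw[OF bij, of d] by simp
    also have "\<dots> = (\<Sum>j\<in>V. d (\<sigma> 0) * d j)" by (intro sum.cong refl e)
    also have "\<dots> = d (\<sigma> 0) * (\<Sum>j\<in>V. d j)" by (simp add: sum_distrib_left)
    finally have "d (\<sigma> 0) = 1"
    proof -
      assume h: "(\<Sum>j\<in>V. d j) = d (\<sigma> 0) * (\<Sum>j\<in>V. d j)"
      have ne: "V \<noteq> {}" using zero_V[of T] by blast
      have "(\<Sum>j\<in>V. d j) > 0" by (rule sum_pos[OF finite_V ne]) (simp add: dpos)
      with h show ?thesis by simp
    qed
    thus "cand i = 1" using sV[of 0] by (simp add: i cand_def d_def)
  qed
next
  fix y assume h: "(\<forall>i\<in>V. 0 \<le> y i) \<and> (\<forall>i. i \<notin> V \<longrightarrow> y i = 0) \<and>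
    (\<forall>i\<in>extending T. y i = 1) \<and> (\<forall>a\<in>roots T. cartan_form T a y = 0)"
  have y0: "y 0 = 1" using h zero_ext by blast
  have ker: "\<forall>k\<in>V. (\<Sum>j\<in>V. c k j * of_int (y j)) = 0"
  proof
    fix k assume k: "k \<in> V"
    have "cartan_form T (simple_root k) y = 0" using h roots.simple[OF k] by blast
    hence "(\<Sum>j\<in>V. cartan T k j * y j) = 0" using cform_simple[OF k] by simp
    hence "real_of_int (\<Sum>j\<in>V. cartan T k j * y j) = 0" by simp
    thus "(\<Sum>j\<in>V. c k j * of_int (y j)) = 0" by (simp add: c_def)
  qed
  show "y = cand"
  proof
    fix i show "y i = cand i"
    proof (cases "i \<in> V")
      case True
      have "real_of_int (y i) = of_int (y 0) * d i" using kernel_unique[OF ker True] by simp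
      thus ?thesis using True y0 by (simp add: cand_def d_def)
    qed (use h in \<open>simp add: cand_def\<close>)
  qed
qed

definition xact :: "nat \<Rightarrow> (nat \<Rightarrow> real) \<Rightarrow> nat \<Rightarrow> real" where
  "xact i x = (\<lambda>j. x j - (if j = i then L x i else 0))"
definition xw :: "nat list \<Rightarrow> (nat \<Rightarrow> real) \<Rightarrow> nat \<Rightarrow> real" where
  "xw g x = foldr xact g x"
definition e :: "nat \<Rightarrow> nat \<Rightarrow> real" where "e j = (\<lambda>k. if k = j then 1 else 0)"

lemma xw_Nil[simp]: "xw [] x = x" by (simp add: xw_def)
lemma xw_Cons[simp]: "xw (i # g) x = xact i (xw g x)" by (simp add: xw_def)

lemma L_xact: "i \<in> V \<Longrightarrow> L (xact i x) k = L x k - L x i * c i k"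
proof -
  assume i: "i \<in> V"
  have "L (xact i x) k = L x k - (\<Sum>j\<in>V. (if j = i then L x i else 0) * c j k)"
    by (simp add: L_def xact_def left_diff_distrib sum_subtractf)
  also have "(\<Sum>j\<in>V. (if j = i then L x i else 0) * c j k) = L x i * c i k"
    using i by (simp add: if_distrib[of "\<lambda>z. z * _"] cong: if_cong)
  finally show ?thesis .
qed

lemma weyl_L:
  assumes "set g \<subseteq> V" and v: "\<forall>k\<in>V. v k = L x k"
  shows "(\<forall>k\<in>V. weyl_act T g v k = L (xw g x) k) \<and> (\<forall>k. k \<notin> V \<longrightarrow> weyl_act T g v k = v k)"
  using assms(1)
proof (induction g)
  case Nil thus ?case using v by (simp add: weyl_act_def)
next
  case (Cons i g)
  hence i: "i \<in> V" and IH: "\<forall>k\<in>V. weyl_act T g v k = L (xw g x) k" "\<forall>k. k \<notin> V \<longrightarrow> weyl_act T g v k = v k"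
    by auto
  have w: "weyl_act T (i # g) v = fire T i (weyl_act T g v)" by (simp add: weyl_act_def)
  show ?case unfolding w using i IH by (simp add: fire_alt L_xact c_def mult.commute)
qed

lemma xw_lin: "set g \<subseteq> V \<Longrightarrow> \<forall>k\<in>V. xw g x k = (\<Sum>j\<in>V. x j * xw g (e j) k)"
proof (induction g)
  case Nil thus ?case by (simp add: e_def if_distrib[of "\<lambda>z. _ * z"] cong: if_cong)
next
  case (Cons i g)
  hence i: "i \<in> V" and IH: "\<forall>k\<in>V. xw g x k = (\<Sum>j\<in>V. x j * xw g (e j) k)" by auto
  have Lw: "L (xw g x) i = (\<Sum>j\<in>V. x j * L (xw g (e j)) i)"
  proof -
    have "L (xw g x) i = (\<Sum>l\<in>V. (\<Sum>j\<in>V. x j * xw g (e j) l) * c l i)"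
      unfolding L_def using IH by (intro sum.cong) auto
    also have "\<dots> = (\<Sum>j\<in>V. x j * L (xw g (e j)) i)"
      unfolding L_def sum_distrib_left sum_distrib_right by (rule trans[OF sum.swap]) (simp add: mult_ac)
    finally show ?thesis .
  qed
  show ?case
  proof
    fix k assume k: "k \<in> V"
    have "xw (i # g) x k = (\<Sum>j\<in>V. x j * xw g (e j) k) - (if k = i then (\<Sum>j\<in>V. x j * L (xw g (e j)) i) else 0)"
      using IH k Lw by (simp add: xact_def)
    also have "\<dots> = (\<Sum>j\<in>V. x j * xw (i # g) (e j) k)"
      by (simp add: xact_def right_diff_distrib sum_subtractf)
    finally show "xw (i # g) x k = (\<Sum>j\<in>V. x j * xw (i # g) (e j) k)" .
  qed
qed

lemma L_lin: "set g \<subseteq> V \<Longrightarrow> L (xw g x) k = (\<Sum>j\<in>V. x j * L (xw g (e j)) k)"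
proof -
  assume g: "set g \<subseteq> V"
  have "L (xw g x) k = (\<Sum>l\<in>V. (\<Sum>j\<in>V. x j * xw g (e j) l) * c l k)"
    unfolding L_def using xw_lin[OF g] by (intro sum.cong) auto
  also have "\<dots> = (\<Sum>j\<in>V. x j * L (xw g (e j)) k)"
    unfolding L_def sum_distrib_left sum_distrib_right by (rule trans[OF sum.swap]) (simp add: mult_ac)
  finally show ?thesis .
qed

lemma c_int: "c i k \<in> \<int>" by (simp add: c_def)

lemma L_int: "\<forall>l. x l \<in> \<int> \<Longrightarrow> L x k \<in> \<int>"
  unfolding L_def by (intro Ints_sum Ints_mult c_int) auto

lemma xw_int: "\<forall>l. xw g (e j) l \<in> \<int>"
proof (induction g)
  case Nil thus ?case by (simp add: e_def)
next
  case (Cons i g)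
  thus ?case by (auto simp: xact_def intro!: Ints_diff L_int)
qed

lemma q_xact: "i \<in> V \<Longrightarrow> q (xact i x) = q x"
proof -
  assume i: "i \<in> V"
  let ?t = "L x i"
  have s1: "(\<Sum>b\<in>V. \<eta> b * c i b * x b) = \<eta> i * L x i"
    unfolding L_def sum_distrib_left
  proof (rule sum.cong)
    fix b assume "b \<in> V" thus "\<eta> b * c i b * x b = \<eta> i * (x b * c b i)" using csym[OF i] by (simp add: mult_ac)
  qed simp
  have "q (xact i x) = (\<Sum>b\<in>V. (\<eta> b * x b * L x b - ?t * (\<eta> b * c i b * x b))
          - (if b = i then ?t * \<eta> b * (L x b - ?t * c i b) else 0))"
    unfolding q_def L_xact[OF i] by (intro sum.cong refl) (auto simp: xact_def algebra_simps)
  also have "\<dots> = q x - ?t * (\<Sum>b\<in>V. \<eta> b * c i b * x b) - ?t * \<eta> i * (L x i - ?t * c i i)"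
    using i by (simp add: sum_subtractf sum_distrib_left q_def)
  finally show ?thesis using s1 cdiag[OF i] by (simp add: algebra_simps)
qed

lemma q_xw: "set g \<subseteq> V \<Longrightarrow> q (xw g x) = q x"
  by (induction g) (auto simp: q_xact)

lemma L_bound:
  obtains K where "K \<ge> 0" "\<And>y Bq k. q y \<le> Bq \<Longrightarrow> \<bar>L y k\<bar> \<le> K * sqrt Bq * (\<Sum>i\<in>V. p i * \<bar>c i k\<bar>)"
proof -
  obtain K where K: "K \<ge> 0" "\<forall>x B i. i \<in> V \<longrightarrow> q x \<le> B \<longrightarrow> \<bar>x i / p i - x 0 / p 0\<bar> \<le> K * sqrt B"
    using V_bound by blast
  show ?thesis
  proof (rule that[OF K(1)])
    fix y Bq k assume qy: "q y \<le> Bq"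
    let ?t = "y 0 / p 0"
    have "L y k = L y k - ?t * L p k"
      by (cases "k \<in> V") (simp_all add: Lp L_out)
    also have "\<dots> = (\<Sum>i\<in>V. p i * (y i / p i - ?t) * c i k)"
      unfolding L_def sum_distrib_left sum_subtractf[symmetric]
    proof (intro sum.cong refl)
      fix i assume i: "i \<in> V"
      show "y i * c i k - ?t * (p i * c i k) = p i * (y i / p i - ?t) * c i k"
        using ppos[OF i] by (simp add: field_simps)
    qed
    finally have "\<bar>L y k\<bar> \<le> (\<Sum>i\<in>V. \<bar>p i * (y i / p i - ?t) * c i k\<bar>)"
      by (simp add: sum_abs)
    also have "\<dots> \<le> (\<Sum>i\<in>V. p i * (K * sqrt Bq) * \<bar>c i k\<bar>)"
    proof (rule sum_mono)
      fix i assume i: "i \<in> V"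
      have "\<bar>p i * (y i / p i - ?t) * c i k\<bar> = p i * \<bar>y i / p i - ?t\<bar> * \<bar>c i k\<bar>"
        using ppos[OF i] by (simp add: abs_mult)
      also have "\<dots> \<le> p i * (K * sqrt Bq) * \<bar>c i k\<bar>"
        using K(2) i qy ppos[OF i] by (intro mult_right_mono mult_left_mono) auto
      finally show "\<bar>p i * (y i / p i - ?t) * c i k\<bar> \<le> p i * (K * sqrt Bq) * \<bar>c i k\<bar>" .
    qed
    also have "\<dots> = K * sqrt Bq * (\<Sum>i\<in>V. p i * \<bar>c i k\<bar>)"
      by (simp add: sum_distrib_left mult_ac)
    finally show "\<bar>L y k\<bar> \<le> K * sqrt Bq * (\<Sum>i\<in>V. p i * \<bar>c i k\<bar>)" .
  qed
qed

lemma finite_int_box: "finite {z :: real. z \<in> \<int> \<and> \<bar>z\<bar> \<le> M}"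
proof (rule finite_subset)
  show "{z :: real. z \<in> \<int> \<and> \<bar>z\<bar> \<le> M} \<subseteq> real_of_int ` {-\<lceil>M\<rceil>..\<lceil>M\<rceil>}"
  proof
    fix z :: real assume "z \<in> {z. z \<in> \<int> \<and> \<bar>z\<bar> \<le> M}"
    then obtain m where z: "z = of_int m" and "\<bar>of_int m\<bar> \<le> M" by (auto elim: Ints_cases)
    hence "m \<in> {-\<lceil>M\<rceil>..\<lceil>M\<rceil>}" by (auto simp: abs_le_iff) linarith+
    thus "z \<in> real_of_int ` {-\<lceil>M\<rceil>..\<lceil>M\<rceil>}" using z by blast
  qed
qed simp

lemma orbit_finite:
  assumes v: "\<forall>k\<in>V. v k = L x0 k"
  shows "finite {weyl_act T g v | g. set g \<subseteq> V}"
proof -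
  obtain K where K: "K \<ge> 0" "\<And>y Bq k. q y \<le> Bq \<Longrightarrow> \<bar>L y k\<bar> \<le> K * sqrt Bq * (\<Sum>i\<in>V. p i * \<bar>c i k\<bar>)"
    using L_bound by blast
  define Bq where "Bq = (\<Sum>j\<in>V. \<bar>q (e j)\<bar>)"
  define M where "M = K * sqrt Bq * (\<Sum>k\<in>V. \<Sum>i\<in>V. p i * \<bar>c i k\<bar>)"
  define Z where "Z = {z :: real. z \<in> \<int> \<and> \<bar>z\<bar> \<le> M}"
  define F where "F = PiE V (\<lambda>_. PiE V (\<lambda>_. Z))"
  define \<Phi> where "\<Phi> W = (\<lambda>k. if k \<in> V then (\<Sum>j\<in>V. x0 j * W j k) else v k)" for W :: "nat \<Rightarrow> nat \<Rightarrow> real"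
  have Bq0: "0 \<le> Bq" unfolding Bq_def by (simp add: sum_nonneg)
  have fF: "finite F" unfolding F_def Z_def by (intro finite_PiE finite_int_box finite_V)
  have sub: "{weyl_act T g v | g. set g \<subseteq> V} \<subseteq> \<Phi> ` F"
  proof
    fix w assume "w \<in> {weyl_act T g v | g. set g \<subseteq> V}"
    then obtain g where w: "w = weyl_act T g v" and g: "set g \<subseteq> V" by auto
    define W where "W = restrict (\<lambda>j. restrict (L (xw g (e j))) V) V"
    have "W \<in> F" unfolding F_def
    proof (intro PiE_I)
      fix j k assume j: "j \<in> V" and k: "k \<in> V"
      have qb: "q (xw g (e j)) \<le> Bq"
        unfolding q_xw[OF g] Bq_def
      proof -
        have "q (e j) \<le> \<bar>q (e j)\<bar>" by simp
        also have "\<bar>q (e j)\<bar> \<le> (\<Sum>j\<in>V. \<bar>q (e j)\<bar>)" by (rule member_le_sum) (use j in auto)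
        finally show "q (e j) \<le> (\<Sum>j\<in>V. \<bar>q (e j)\<bar>)" .
      qed
      have "\<bar>L (xw g (e j)) k\<bar> \<le> K * sqrt Bq * (\<Sum>i\<in>V. p i * \<bar>c i k\<bar>)" by (rule K(2)[OF qb])
      also have "\<dots> \<le> M" unfolding M_def
      proof (rule mult_left_mono)
        have nn: "0 \<le> (\<Sum>i\<in>V. p i * \<bar>c i k'\<bar>)" for k'
          using ppos by (intro sum_nonneg mult_nonneg_nonneg) (simp_all add: less_imp_le)
        show "(\<Sum>i\<in>V. p i * \<bar>c i k\<bar>) \<le> (\<Sum>k\<in>V. \<Sum>i\<in>V. p i * \<bar>c i k\<bar>)"
          by (rule member_le_sum) (use k nn in auto)
        show "0 \<le> K * sqrt Bq" using K(1) Bq0 by simp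
      qed
      finally have "\<bar>L (xw g (e j)) k\<bar> \<le> M" .
      moreover have "L (xw g (e j)) k \<in> \<int>" by (rule L_int[OF xw_int])
      ultimately show "W j k \<in> Z" using j k by (simp add: W_def Z_def)
    qed (auto simp: W_def)
    moreover have "w = \<Phi> W"
    proof (rule ext)
      fix k show "w k = \<Phi> W k"
      proof (cases "k \<in> V")
        case True
        have "w k = L (xw g x0) k" using weyl_L[OF g v] True w by simp
        also have "\<dots> = (\<Sum>j\<in>V. x0 j * L (xw g (e j)) k)" by (rule L_lin[OF g])
        also have "\<dots> = (\<Sum>j\<in>V. x0 j * W j k)" using True
          by (intro sum.cong refl) (simp add: W_def)
        finally show ?thesis using True by (simp add: \<Phi>_def)
      next
        case False thus ?thesis using weyl_L[OF g v] w by (simp add: \<Phi>_def)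
      qed
    qed
    ultimately show "w \<in> \<Phi> ` F" by blast
  qed
  show ?thesis by (rule finite_subset[OF sub]) (use fF in simp)
qed

end

lemma solve_square:
  fixes M :: "nat \<Rightarrow> nat \<Rightarrow> real" and m :: nat and b :: "nat \<Rightarrow> real"
  assumes inj: "\<And>w. (\<And>r. r < m \<Longrightarrow> (\<Sum>s<m. M r s * w s) = 0) \<Longrightarrow> \<forall>s<m. w s = 0"
  shows "\<exists>w. \<forall>r<m. (\<Sum>s<m. M r s * w s) = b r"
proof -
  define A where "A = mat m m (\<lambda>(r,s). M r s)"
  have A: "A \<in> carrier_mat m m" unfolding A_def by auto
  have "det A \<noteq> 0"
  proof
    assume "det A = 0"
    then obtain v where v: "v \<in> carrier_vec m" "v \<noteq> 0\<^sub>v m" "A *\<^sub>v v = 0\<^sub>v m"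
      using det_0_iff_vec_prod_zero_field[OF A] by blast
    have "\<forall>s<m. v $ s = 0"
    proof (rule inj)
      fix r assume r: "r < m"
      have "(A *\<^sub>v v) $ r = 0" using v r by auto
      moreover have "(A *\<^sub>v v) $ r = (\<Sum>s<m. M r s * v $ s)"
        using r v(1) unfolding A_def by (simp add: scalar_prod_def lessThan_atLeast0)
      ultimately show "(\<Sum>s<m. M r s * v $ s) = 0" by simp
    qed
    hence "v = 0\<^sub>v m" using v by (intro eq_vecI) auto
    with v show False by simp
  qed
  from det_non_zero_imp_unit[OF A this, of "()"]
  obtain B where B: "B \<in> carrier_mat m m" "A * B = 1\<^sub>m m"
    unfolding Units_def ring_mat_def by auto
  define bv where "bv = vec m b"
  have bv: "bv \<in> carrier_vec m" unfolding bv_def by auto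
  have "A *\<^sub>v (B *\<^sub>v bv) = bv"
    using assoc_mult_mat_vec[OF A B(1) bv] B(2) bv by simp
  show ?thesis
  proof (intro exI allI impI)
    fix r assume r: "r < m"
    have "(A *\<^sub>v (B *\<^sub>v bv)) $ r = b r" using \<open>A *\<^sub>v (B *\<^sub>v bv) = bv\<close> r unfolding bv_def by simp
    thus "(\<Sum>s<m. M r s * (B *\<^sub>v bv) $ s) = b r"
      using r B bv unfolding A_def by (auto simp: scalar_prod_def lessThan_atLeast0)
  qed
qed


lemma V_split: "{0..m::nat} = insert 0 (Suc ` {..<m})"
proof (rule Set.set_eqI)
  fix x show "x \<in> {0..m} \<longleftrightarrow> x \<in> insert 0 (Suc ` {..<m})" by (cases x) auto
qed

context good
begin

definition dd :: "(nat \<Rightarrow> real) \<Rightarrow> real" where "dd w = (\<Sum>k\<in>V. d k * w k)"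

lemma delta_dot_eq: "delta_dot T w = dd w"
  unfolding delta_dot_def dd_def delta_eq
  by (intro sum.cong refl) (simp add: cand_def d_def)

lemma dd_fire: "i \<in> V \<Longrightarrow> dd (fire T i w) = dd w"
proof -
  assume i: "i \<in> V"
  have "dd (fire T i w) = (\<Sum>k\<in>V. d k * w k - w i * (c i k * d k))"
    unfolding dd_def fire_alt[OF i] by (intro sum.cong refl) (simp add: c_def algebra_simps)
  also have "\<dots> = dd w - w i * (\<Sum>k\<in>V. c i k * d k)"
    by (simp add: dd_def sum_subtractf sum_distrib_left)
  finally show ?thesis using cnull[OF i] by simp
qed

lemma dd_L: "dd (L x) = 0"
proof -
  have "dd (L x) = (\<Sum>i\<in>V. x i * (\<Sum>k\<in>V. c i k * d k))"
    unfolding dd_def L_def sum_distrib_left sum_distrib_right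
    by (rule trans[OF sum.swap]) (simp add: mult_ac)
  thus ?thesis by (simp add: cnull)
qed

lemma exists_x:
  assumes v: "dd v = 0"
  shows "\<exists>x. \<forall>k\<in>V. v k = L x k"
proof -
  define m where "m = rank T"
  have Vm: "V = {0..m}" by (simp add: vertices_def m_def)
  define M where "M r s = c (Suc s) (Suc r)" for r s
  define X where "X w = (\<lambda>j. if 1 \<le> j \<and> j \<le> m then w (j - 1) else (0::real))" for w :: "nat \<Rightarrow> real"
  have LX: "L (X w) k = (\<Sum>s<m. w s * c (Suc s) k)" for w k
  proof -
    have "L (X w) k = (\<Sum>j\<in>insert 0 (Suc ` {..<m}). X w j * c j k)"
      unfolding L_def Vm V_split ..
    also have "\<dots> = (\<Sum>j\<in>Suc ` {..<m}. X w j * c j k)" by (subst sum.insert) (auto simp: X_def)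
    also have "\<dots> = (\<Sum>s<m. w s * c (Suc s) k)" by (subst sum.reindex) (auto simp: X_def)
    finally show ?thesis .
  qed
  have X0: "X w 0 = 0" for w by (simp add: X_def)
  have inj: "\<forall>s<m. w s = 0" if h: "\<And>r. r < m \<Longrightarrow> (\<Sum>s<m. M r s * w s) = 0" for w
  proof -
    have LX0: "L (X w) k = 0" if k: "k \<in> V" "k \<noteq> 0" for k
    proof -
      obtain r where r: "k = Suc r" using k(2) not0_implies_Suc by blast
      have "r < m" using k r Vm by auto
      have "L (X w) k = (\<Sum>s<m. M r s * w s)" unfolding LX by (simp add: r M_def mult_ac)
      thus ?thesis using h[OF \<open>r < m\<close>] by simp
    qed
    have "q (X w) = 0" unfolding q_def
    proof (rule sum.neutral, rule ballI)
      fix b assume b: "b \<in> V"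
      show "\<eta> b * X w b * L (X w) b = 0" by (cases "b = 0") (simp_all add: X0 LX0 b)
    qed
    hence c0: "X w i / p i = X w 0 / p 0" if "i \<in> V" for i using that by (intro q_zero_const) simp_all
    show ?thesis
    proof (intro allI impI)
      fix s assume s: "s < m"
      have "Suc s \<in> V" using s Vm by simp
      from c0[OF this] ppos[OF this] have "X w (Suc s) = 0" by (simp add: X0)
      thus "w s = 0" using s by (simp add: X_def)
    qed
  qed
  obtain w where w: "\<forall>r<m. (\<Sum>s<m. M r s * w s) = v (Suc r)"
    using solve_square[where M = M and m = m and b = "\<lambda>r. v (Suc r)", OF inj] by blast
  have pos: "v k = L (X w) k" if k: "k \<in> V" "k \<noteq> 0" for k
  proof -
    obtain r where r: "k = Suc r" using k(2) not0_implies_Suc by blast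
    have "r < m" using k r Vm by auto
    have "L (X w) k = (\<Sum>s<m. M r s * w s)" unfolding LX by (simp add: r M_def mult_ac)
    thus ?thesis using w \<open>r < m\<close> r by simp
  qed
  have "(\<Sum>k\<in>V. d k * (L (X w) k - v k)) = 0"
    using dd_L[of "X w"] v by (simp add: dd_def right_diff_distrib sum_subtractf)
  moreover have "(\<Sum>k\<in>V. d k * (L (X w) k - v k)) = d 0 * (L (X w) 0 - v 0)"
  proof -
    have "(\<Sum>k\<in>V. d k * (L (X w) k - v k)) = d 0 * (L (X w) 0 - v 0) + (\<Sum>k\<in>V-{0}. d k * (L (X w) k - v k))"
      by (rule sum.remove) simp_all
    also have "(\<Sum>k\<in>V-{0}. d k * (L (X w) k - v k)) = 0" by (rule sum.neutral) (auto simp: pos)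
    finally show ?thesis by simp
  qed
  ultimately have "v 0 = L (X w) 0" using dpos[of 0] by simp
  hence "\<forall>k\<in>V. v k = L (X w) k" using pos by metis
  thus ?thesis by blast
qed

lemma reach_orbit: "game_reach T v w \<Longrightarrow> \<exists>g. set g \<subseteq> V \<and> w = weyl_act T g v"
proof (induction rule: rtranclp_induct)
  case base show ?case by (intro exI[of _ "[]"]) (simp add: weyl_act_def)
next
  case (step u w)
  then obtain g where g: "set g \<subseteq> V" "u = weyl_act T g v" by blast
  from step(2) obtain i where i: "i \<in> V" "w = fire T i u" by (auto simp: legal_move_def)
  show ?case using g i by (intro exI[of _ "i # g"]) (simp add: weyl_act_def)
qed

lemma reach_dd: "game_reach T v w \<Longrightarrow> dd w = dd v"
  by (induction rule: rtranclp_induct) (auto simp: legal_move_def dd_fire)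

lemma closure:
  assumes v: "dd v = 0" and u: "game_reach T v u" and i: "i \<in> V"
  shows "game_reach T v (fire T i u)"
proof -
  obtain x0 where x0: "\<forall>k\<in>V. v k = L x0 k" using exists_x[OF v] by blast
  define S where "S = {u. game_reach T v u}"
  have "S \<subseteq> {weyl_act T g v | g. set g \<subseteq> V}" unfolding S_def using reach_orbit by blast
  hence fS: "finite S" using orbit_finite[OF x0] finite_subset by blast
  have dS: "\<forall>u\<in>S. dd u = 0" using reach_dd v by (simp add: S_def)
  have legal: "fire T j w \<in> S" if "w \<in> S" "j \<in> V" "w j < 0" for w j
  proof -
    have "legal_move T w (fire T j w)" using that by (auto simp: legal_move_def)
    thus ?thesis using that(1) unfolding S_def by (auto intro: rtranclp.rtrancl_into_rtrancl)
  qed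
  define wt where "wt z = d (snd z) * \<bar>fst z (snd z)\<bar>" for z :: "(nat \<Rightarrow> real) \<times> nat"
  define Pin where "Pin = {z \<in> S \<times> V. fst z (snd z) > 0}"
  define Pout where "Pout = {z \<in> S \<times> V. fst z (snd z) < 0}"
  define h where "h z = (fire T (snd z) (fst z), snd z)" for z :: "(nat \<Rightarrow> real) \<times> nat"
  have fin: "finite (S \<times> V)" using fS by simp
  have eq: "sum wt Pin = sum wt Pout"
  proof -
    have "0 = (\<Sum>u\<in>S. dd u)" using dS by simp
    also have "\<dots> = (\<Sum>z\<in>S \<times> V. d (snd z) * fst z (snd z))"
      unfolding dd_def by (simp add: sum.cartesian_product case_prod_beta)
    also have "\<dots> = (\<Sum>z\<in>S \<times> V. (if fst z (snd z) > 0 then wt z else 0) - (if fst z (snd z) < 0 then wt z else 0))"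
      by (intro sum.cong refl) (auto simp: wt_def)
    also have "\<dots> = sum wt Pin - sum wt Pout"
      unfolding Pin_def Pout_def sum_subtractf by (simp add: sum.inter_filter fin)
    finally show ?thesis by simp
  qed
  have hin: "h ` Pout \<subseteq> Pin"
    using legal by (auto simp: h_def Pin_def Pout_def fire_i)
  have hinj: "inj_on h Pout"
  proof (rule inj_onI)
    fix a b assume a: "a \<in> Pout" and b: "b \<in> Pout" and hab: "h a = h b"
    obtain w j where a': "a = (w, j)" by (cases a)
    obtain w' j' where b': "b = (w', j')" by (cases b)
    have jj: "j = j'" and ff: "fire T j w = fire T j w'" using hab by (auto simp: h_def a' b')
    have "j \<in> V" using a by (simp add: Pout_def a')
    hence "w = w'" using arg_cong[OF ff, of "fire T j"] by (simp add: fire_invol)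
    thus "a = b" using a' b' jj by simp
  qed
  have "sum wt (h ` Pout) = sum (wt \<circ> h) Pout" by (rule sum.reindex[OF hinj])
  also have "\<dots> = sum wt Pout"
    by (intro sum.cong refl) (auto simp: wt_def h_def Pout_def fire_i)
  finally have hs: "sum wt (h ` Pout) = sum wt Pout" .
  have fPin: "finite Pin" unfolding Pin_def using fin by simp
  have "sum wt Pin = sum wt (Pin - h ` Pout) + sum wt (h ` Pout)"
    by (rule sum.subset_diff[OF hin fPin])
  hence z: "sum wt (Pin - h ` Pout) = 0" using eq hs by simp
  have empty: "Pin - h ` Pout = {}"
  proof (rule ccontr)
    assume ne: "Pin - h ` Pout \<noteq> {}"
    have "0 < sum wt (Pin - h ` Pout)"
    proof (rule sum_pos)
      show "finite (Pin - h ` Pout)" using fPin by simp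
      show "Pin - h ` Pout \<noteq> {}" by (rule ne)
      fix z assume "z \<in> Pin - h ` Pout"
      thus "0 < wt z" by (auto simp: Pin_def wt_def dpos)
    qed
    with z show False by simp
  qed
  have uS: "u \<in> S" using u by (simp add: S_def)
  show ?thesis
  proof (cases "u i" "0 :: real" rule: linorder_cases)
    case less thus ?thesis using legal[OF uS i] by (simp add: S_def)
  next
    case equal
    hence "fire T i u = u" by (intro ext) (simp add: fire_alt[OF i])
    thus ?thesis using u by simp
  next
    case greater
    hence "(u, i) \<in> Pin" using uS i by (simp add: Pin_def)
    with empty obtain z where z: "z \<in> Pout" "(u, i) = h z" by blast
    obtain w j where zw: "z = (w, j)" by (cases z)
    have "j = i" "u = fire T i w" using z(2) by (auto simp: h_def zw)
    hence "fire T i u = w" using fire_invol[OF i] by simp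
    moreover have "w \<in> S" using z(1) by (simp add: Pout_def zw)
    ultimately show ?thesis by (simp add: S_def)
  qed
qed

lemma reach_all: "dd v = 0 \<Longrightarrow> set g \<subseteq> V \<Longrightarrow> game_reach T v (weyl_act T g v)"
proof (induction g)
  case Nil thus ?case by (simp add: weyl_act_def)
next
  case (Cons i g)
  hence "game_reach T v (weyl_act T g v)" "i \<in> V" by auto
  from closure[OF Cons.prems(1) this] show ?case by (simp add: weyl_act_def)
qed

theorem main:
  assumes "delta_dot T v = 0"
  shows "(\<forall>g \<in> lists (vertices T). game_reach T v (weyl_act T g v))
         \<and> (\<forall>w. game_reach T v w \<longrightarrow> game_reach T w v)"
proof (intro conjI ballI allI impI)
  have v: "dd v = 0" using assms by (simp add: delta_dot_eq)
  fix g assume "g \<in> lists V"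
  thus "game_reach T v (weyl_act T g v)" using reach_all[OF v] by (simp add: in_lists_conv_set subset_iff)
next
  have v: "dd v = 0" using assms by (simp add: delta_dot_eq)
  fix w assume w: "game_reach T v w"
  obtain g where g: "set g \<subseteq> V" "w = weyl_act T g v" using reach_orbit[OF w] by blast
  have "dd w = 0" using reach_dd[OF w] v by simp
  from reach_all[OF this, of "rev g"] g show "game_reach T w v" by (simp add: weyl_rev)
qed

end

lemma kac_off_nonpos: "kac_off T i j \<le> 0"
  by (cases T) (auto simp: simple_edge_def)
lemma offdiag_all: "i \<noteq> j \<Longrightarrow> cartan T i j \<le> 0"
  by (simp add: cartan_def kac_def kac_off_nonpos)
lemma conn_parent:
  fixes r :: "nat \<Rightarrow> nat"
  assumes iV: "i \<in> vertices T"
    and par_ok: "\<And>i. i \<in> vertices T \<Longrightarrow> i \<noteq> 0 \<Longrightarrow> par i \<in> vertices T \<and> cartan T (par i) i \<noteq> 0 \<and> r (par i) < r i"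
  shows "(\<lambda>a b. a \<in> vertices T \<and> b \<in> vertices T \<and> cartan T a b \<noteq> 0)\<^sup>*\<^sup>* 0 i"
  using iV
proof (induction "r i" arbitrary: i rule: less_induct)
  case less
  show ?case
  proof (cases "i = 0")
    case False
    with par_ok[OF less.prems] have p: "par i \<in> vertices T" "cartan T (par i) i \<noteq> 0" "r (par i) < r i" by auto
    from less.hyps[OF p(3) p(1)] p less.prems show ?thesis
      by (auto intro: rtranclp.rtrancl_into_rtrancl)
  qed simp
qed

lemma sum_supp: "finite A \<Longrightarrow> B \<subseteq> A \<Longrightarrow> (\<And>j. j \<in> A \<Longrightarrow> j \<notin> B \<Longrightarrow> f j = 0) \<Longrightarrow> sum f A = sum f B"
  by (rule sum.mono_neutral_right) auto

lemma sum_at: "finite A \<Longrightarrow> B \<subseteq> A \<Longrightarrow> (\<And>j. j \<in> A \<Longrightarrow> j \<notin> B \<Longrightarrow> f j = 0) \<Longrightarrow> sum f B = 0 \<Longrightarrow> sum f A = 0"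
  by (subst sum.mono_neutral_right[of A B]) auto
lemma mem_succ_set[simp]: "(a, b) \<in> {(k, Suc k) | k. P k} \<longleftrightarrow> b = Suc a \<and> P a" by auto
lemma mod_Suc_le: "i \<le> n \<Longrightarrow> Suc i mod Suc n = (if i = n then 0 else Suc i)"
  by (auto simp: mod_Suc)

lemma kacA: "i \<le> n \<Longrightarrow> j \<le> n \<Longrightarrow> kac_off (TA n) j i =
   (if n = 1 then -2 else if j = (if i = n then 0 else Suc i) \<or> i = (if j = n then 0 else Suc j) then -1 else 0)"
  by (simp add: mod_Suc_le)

lemma good_A: assumes n: "n = Suc (Suc m)"
  shows "good (TA n) (\<lambda>_. 1) (\<lambda>_. 1)"
proof (unfold_locales)
  fix i j :: nat assume "i \<noteq> j" thus "cartan (TA n) i j \<le> 0" by (rule offdiag_all)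
next
  fix i k :: nat assume "i \<in> vertices (TA n)" "k \<in> vertices (TA n)"
  thus "1 * real_of_int (cartan (TA n) i k) = 1 * real_of_int (cartan (TA n) k i)"
    using n by (auto simp: vertices_def cartan_def kac_def)
next
  fix i :: nat assume i: "i \<in> vertices (TA n)"
  show "(\<Sum>j\<in>vertices (TA n). cartan (TA n) i j * 1) = 0"
  proof -
    consider "i = 0" | "i = n" | "0 < i" "i < n" using i by (force simp: vertices_def)
    thus ?thesis
    proof cases
      case 1 show ?thesis by (rule sum_at[where B = "{0, 1, n}"])
          (use n 1 in \<open>auto simp: vertices_def cartan_def kac_def kacA simp del: kac_off.simps\<close>)
    next
      case 2 show ?thesis by (rule sum_at[where B = "{0, n - 1, n}"])
          (use n 2 in \<open>auto simp: vertices_def cartan_def kac_def kacA simp del: kac_off.simps\<close>)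
    next
      case 3
      then obtain l where l: "i = Suc l" using not0_implies_Suc by force
      show ?thesis by (rule sum_at[where B = "{l, Suc l, Suc (Suc l)}"])
          (use n 3 l in \<open>auto simp: vertices_def cartan_def kac_def kacA simp del: kac_off.simps\<close>)
    qed
  qed
next
  fix i :: nat assume i: "i \<in> vertices (TA n)"
  show "(\<lambda>a b. a \<in> vertices (TA n) \<and> b \<in> vertices (TA n) \<and> cartan (TA n) a b \<noteq> 0)\<^sup>*\<^sup>* 0 i"
    by (rule conn_parent[OF i, where par = "\<lambda>i. i - 1" and r = id])
       (use n in \<open>auto simp: vertices_def cartan_def kac_def kacA simp del: kac_off.simps\<close>)
qed simp_all

lemma good_B: assumes n: "n = Suc (Suc (Suc (Suc m)))"
  shows "good (TB n) (\<lambda>i. if i \<le> 1 \<or> i = n then 1 else 2) (\<lambda>i. if i = n then 1 else 2)"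
proof (unfold_locales)
  fix i j :: nat assume "i \<noteq> j" thus "cartan (TB n) i j \<le> 0" by (rule offdiag_all)
next
  fix i k :: nat assume "i \<in> vertices (TB n)" "k \<in> vertices (TB n)"
  thus "(if k = n then 1 else 2) * real_of_int (cartan (TB n) i k) = (if i = n then 1 else 2) * real_of_int (cartan (TB n) k i)"
    using n by (auto simp: vertices_def cartan_def kac_def simple_edge_def)
next
  fix i :: nat assume "i \<in> vertices (TB n)" thus "0 < (if i \<le> 1 \<or> i = n then 1 else (2::int))" by simp
next
  fix i :: nat assume i: "i \<in> vertices (TB n)"
  show "(\<Sum>j\<in>vertices (TB n). cartan (TB n) i j * (if j \<le> 1 \<or> j = n then 1 else 2)) = 0"
  proof -
    consider "i = 0" | "i = 1" | "i = 2" | "i = n" | "i = n - 1" | "3 \<le> i" "i < n - 1" using i n by (force simp: vertices_def)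
    thus ?thesis
    proof cases
      case 1 show ?thesis by (rule sum_at[where B = "{0, 2}"])
          (use n 1 in \<open>auto simp: vertices_def cartan_def kac_def simple_edge_def\<close>)
    next
      case 2 show ?thesis by (rule sum_at[where B = "{1, 2}"])
          (use n 2 in \<open>auto simp: vertices_def cartan_def kac_def simple_edge_def\<close>)
    next
      case 3 show ?thesis by (rule sum_at[where B = "{0, 1, 2, 3}"])
          (use n 3 in \<open>auto simp: vertices_def cartan_def kac_def simple_edge_def\<close>)
    next
      case 4 show ?thesis by (rule sum_at[where B = "{n - 1, n}"])
          (use n 4 in \<open>auto simp: vertices_def cartan_def kac_def simple_edge_def\<close>)
    next
      case 5 show ?thesis by (rule sum_at[where B = "{n - 2, n - 1, n}"])
          (use n 5 in \<open>auto simp: vertices_def cartan_def kac_def simple_edge_def\<close>)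
    next
      case 6
      then obtain l where l: "i = Suc l" using not0_implies_Suc by force
      show ?thesis by (rule sum_at[where B = "{l, Suc l, Suc (Suc l)}"])
          (use n 6 l in \<open>auto simp: vertices_def cartan_def kac_def simple_edge_def\<close>)
    qed
  qed
next
  fix i :: nat assume i: "i \<in> vertices (TB n)"
  show "(\<lambda>a b. a \<in> vertices (TB n) \<and> b \<in> vertices (TB n) \<and> cartan (TB n) a b \<noteq> 0)\<^sup>*\<^sup>* 0 i"
    by (rule conn_parent[OF i, where par = "\<lambda>i. if i = 1 then 2 else if i = 2 then 0 else i - 1"
          and r = "\<lambda>i. if i = 1 then n + 5 else i"])
       (use n in \<open>auto simp: vertices_def cartan_def kac_def simple_edge_def\<close>)
qed simp_all

lemma good_D: assumes n: "n = Suc (Suc (Suc (Suc (Suc m))))"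
  shows "good (TD n) (\<lambda>i. if i \<le> 1 \<or> n - 1 \<le> i then 1 else 2) (\<lambda>_. 1)"
proof (unfold_locales)
  fix i j :: nat assume "i \<noteq> j" thus "cartan (TD n) i j \<le> 0" by (rule offdiag_all)
next
  fix i k :: nat assume "i \<in> vertices (TD n)" "k \<in> vertices (TD n)"
  thus "1 * real_of_int (cartan (TD n) i k) = 1 * real_of_int (cartan (TD n) k i)"
    by (auto simp: cartan_def kac_def simple_edge_def)
next
  fix i :: nat assume "i \<in> vertices (TD n)" thus "0 < (if i \<le> 1 \<or> n - 1 \<le> i then 1 else (2::int))" by simp
next
  fix i :: nat assume i: "i \<in> vertices (TD n)"
  show "(\<Sum>j\<in>vertices (TD n). cartan (TD n) i j * (if j \<le> 1 \<or> n - 1 \<le> j then 1 else 2)) = 0"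
  proof -
    consider "i = 0" | "i = 1" | "i = 2" | "i = n" | "i = n - 1" | "i = n - 2" | "3 \<le> i" "i < n - 2" using i n by (force simp: vertices_def)
    thus ?thesis
    proof cases
      case 1 show ?thesis by (rule sum_at[where B = "{0, 2}"])
          (use n 1 in \<open>auto simp: vertices_def cartan_def kac_def simple_edge_def\<close>)
    next
      case 2 show ?thesis by (rule sum_at[where B = "{1, 2}"])
          (use n 2 in \<open>auto simp: vertices_def cartan_def kac_def simple_edge_def\<close>)
    next
      case 3 show ?thesis by (rule sum_at[where B = "{0, 1, 2, 3}"])
          (use n 3 in \<open>auto simp: vertices_def cartan_def kac_def simple_edge_def\<close>)
    next
      case 4 show ?thesis by (rule sum_at[where B = "{n - 2, n}"])
          (use n 4 in \<open>auto simp: vertices_def cartan_def kac_def simple_edge_def\<close>)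
    next
      case 5 show ?thesis by (rule sum_at[where B = "{n - 2, n - 1}"])
          (use n 5 in \<open>auto simp: vertices_def cartan_def kac_def simple_edge_def\<close>)
    next
      case 6 show ?thesis by (rule sum_at[where B = "{n - 3, n - 2, n - 1, n}"])
          (use n 6 in \<open>auto simp: vertices_def cartan_def kac_def simple_edge_def\<close>)
    next
      case 7
      then obtain l where l: "i = Suc l" using not0_implies_Suc by force
      show ?thesis by (rule sum_at[where B = "{l, Suc l, Suc (Suc l)}"])
          (use n 7 l in \<open>auto simp: vertices_def cartan_def kac_def simple_edge_def\<close>)
    qed
  qed
next
  fix i :: nat assume i: "i \<in> vertices (TD n)"
  show "(\<lambda>a b. a \<in> vertices (TD n) \<and> b \<in> vertices (TD n) \<and> cartan (TD n) a b \<noteq> 0)\<^sup>*\<^sup>* 0 i"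
    by (rule conn_parent[OF i, where par = "\<lambda>i. if i = 1 then 2 else if i = 2 then 0 else if i = n then n - 2 else i - 1"
          and r = "\<lambda>i. if i = 1 then n + 5 else i"])
       (use n in \<open>auto simp: vertices_def cartan_def kac_def simple_edge_def\<close>)
qed simp_all


lemma good_C: assumes n: "n = Suc (Suc m)"
  shows "good (TC n) (\<lambda>_. 1) (\<lambda>i. if i = 0 \<or> i = n then 2 else 1)"
proof (unfold_locales)
  fix i j :: nat assume "i \<noteq> j" thus "cartan (TC n) i j \<le> 0" by (rule offdiag_all)
next
  fix i k :: nat assume "i \<in> vertices (TC n)" "k \<in> vertices (TC n)"
  thus "(if k = 0 \<or> k = n then 2 else 1) * real_of_int (cartan (TC n) i k) =
        (if i = 0 \<or> i = n then 2 else 1) * real_of_int (cartan (TC n) k i)"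
    using n by (auto simp: vertices_def cartan_def kac_def simple_edge_def)
next
  fix i :: nat assume i: "i \<in> vertices (TC n)"
  let ?f = "\<lambda>j. cartan (TC n) i j * 1"
  show "(\<Sum>j\<in>vertices (TC n). cartan (TC n) i j * 1) = 0"
  proof (cases "i = 0")
    case True
    have "sum ?f (vertices (TC n)) = sum ?f {0, 1}"
      by (rule sum_supp) (use n True in \<open>auto simp: vertices_def cartan_def kac_def simple_edge_def\<close>)
    thus ?thesis using n True by (simp add: vertices_def cartan_def kac_def)
  next
    case False
    note i0 = False
    show ?thesis
    proof (cases "i = n")
      case True
      have "sum ?f (vertices (TC n)) = sum ?f {n - 1, n}"
        by (rule sum_supp) (use n True in \<open>auto simp: vertices_def cartan_def kac_def simple_edge_def\<close>)
      thus ?thesis using n True by (simp add: vertices_def cartan_def kac_def)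
    next
      case False
      have "sum ?f (vertices (TC n)) = sum ?f {i - 1, i, i + 1}"
        by (rule sum_supp) (use n i i0 False in \<open>auto simp: vertices_def cartan_def kac_def simple_edge_def\<close>)
      also have "\<dots> = ?f (i - 1) + ?f i + ?f (i + 1)"
      proof -
        have "i - 1 \<noteq> i" "i - 1 \<noteq> i + 1" "i \<noteq> i + 1" using i0 by auto
        thus ?thesis by simp
      qed
      also have "\<dots> = 0" using n i i0 False by (auto simp: vertices_def cartan_def kac_def simple_edge_def)
      finally show ?thesis .
    qed
  qed
next
  fix i :: nat assume i: "i \<in> vertices (TC n)"
  show "(\<lambda>a b. a \<in> vertices (TC n) \<and> b \<in> vertices (TC n) \<and> cartan (TC n) a b \<noteq> 0)\<^sup>*\<^sup>* 0 i"
    by (rule conn_parent[OF i, where par = "\<lambda>i. i - 1" and r = id])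
       (use n in \<open>auto simp: vertices_def cartan_def kac_def simple_edge_def\<close>)
qed simp_all


lemma V_A1: "vertices (TA 1) = {0,1}" by (auto simp: vertices_def)

lemma good_A1: "good (TA 1) (\<lambda>i. ([1,1] :: int list) ! i) (\<lambda>_. 1)"
proof (unfold_locales)
  fix i j :: nat assume "i \<noteq> j" thus "cartan (TA 1) i j \<le> 0" by (rule offdiag_all)
next
  fix i k :: nat assume "i \<in> vertices (TA 1)" "k \<in> vertices (TA 1)"
  thus "1 * real_of_int (cartan (TA 1) i k) = 1 * real_of_int (cartan (TA 1) k i)"
    by (simp only: V_A1 insert_iff empty_iff, elim disjE; simp add: cartan_def kac_def simple_edge_def V_A1)
next
  fix i :: nat assume "i \<in> vertices (TA 1)"
  thus "0 < ([1,1] :: int list) ! i"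
    by (simp only: V_A1 insert_iff empty_iff, elim disjE; simp)
next
  fix i :: nat assume "i \<in> vertices (TA 1)"
  thus "(\<Sum>j\<in>vertices (TA 1). cartan (TA 1) i j * ([1,1] :: int list) ! j) = 0"
    by (simp only: V_A1 insert_iff empty_iff, elim disjE; simp add: cartan_def kac_def simple_edge_def V_A1 vertices_def)
next
  fix i :: nat assume i: "i \<in> vertices (TA 1)"
  show "(\<lambda>a b. a \<in> vertices (TA 1) \<and> b \<in> vertices (TA 1) \<and> cartan (TA 1) a b \<noteq> 0)\<^sup>*\<^sup>* 0 i"
    by (rule conn_parent[OF i, where par = "\<lambda>i. ([0,0] :: nat list) ! i" and r = "\<lambda>i. ([0,1] :: nat list) ! i"])
       (simp only: V_A1 insert_iff empty_iff, elim disjE; simp add: cartan_def kac_def simple_edge_def V_A1 vertices_def)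
qed (auto simp: V_A1)

lemma V_B3: "vertices (TB 3) = {0,1,2,3}" by (auto simp: vertices_def)

lemma good_B3: "good (TB 3) (\<lambda>i. ([1,1,2,1] :: int list) ! i) (\<lambda>i. ([2,2,2,1] :: real list) ! i)"
proof (unfold_locales)
  fix i j :: nat assume "i \<noteq> j" thus "cartan (TB 3) i j \<le> 0" by (rule offdiag_all)
next
  fix i k :: nat assume "i \<in> vertices (TB 3)" "k \<in> vertices (TB 3)"
  thus "([2,2,2,1] :: real list) ! k * real_of_int (cartan (TB 3) i k) = ([2,2,2,1] :: real list) ! i * real_of_int (cartan (TB 3) k i)"
    by (simp only: V_B3 insert_iff empty_iff, elim disjE; simp add: cartan_def kac_def simple_edge_def V_B3)
next
  fix i :: nat assume "i \<in> vertices (TB 3)"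
  thus "0 < ([1,1,2,1] :: int list) ! i"
    by (simp only: V_B3 insert_iff empty_iff, elim disjE; simp)
next
  fix i :: nat assume "i \<in> vertices (TB 3)"
  thus "(\<Sum>j\<in>vertices (TB 3). cartan (TB 3) i j * ([1,1,2,1] :: int list) ! j) = 0"
    by (simp only: V_B3 insert_iff empty_iff, elim disjE; simp add: cartan_def kac_def simple_edge_def V_B3)
next
  fix i :: nat assume i: "i \<in> vertices (TB 3)"
  show "(\<lambda>a b. a \<in> vertices (TB 3) \<and> b \<in> vertices (TB 3) \<and> cartan (TB 3) a b \<noteq> 0)\<^sup>*\<^sup>* 0 i"
    by (rule conn_parent[OF i, where par = "\<lambda>i. ([0,2,0,2] :: nat list) ! i" and r = "\<lambda>i. ([0,2,1,2] :: nat list) ! i"])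
       (simp only: V_B3 insert_iff empty_iff, elim disjE; simp add: cartan_def kac_def simple_edge_def V_B3 vertices_def)
qed (auto simp: V_B3)

lemma V_D4: "vertices (TD 4) = {0,1,2,3,4}" by (auto simp: vertices_def)

lemma good_D4: "good (TD 4) (\<lambda>i. ([1,1,2,1,1] :: int list) ! i) (\<lambda>_. 1)"
proof (unfold_locales)
  fix i j :: nat assume "i \<noteq> j" thus "cartan (TD 4) i j \<le> 0" by (rule offdiag_all)
next
  fix i k :: nat assume "i \<in> vertices (TD 4)" "k \<in> vertices (TD 4)"
  thus "1 * real_of_int (cartan (TD 4) i k) = 1 * real_of_int (cartan (TD 4) k i)"
    by (simp only: V_D4 insert_iff empty_iff, elim disjE; simp add: cartan_def kac_def simple_edge_def V_D4)
next
  fix i :: nat assume "i \<in> vertices (TD 4)"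
  thus "0 < ([1,1,2,1,1] :: int list) ! i"
    by (simp only: V_D4 insert_iff empty_iff, elim disjE; simp)
next
  fix i :: nat assume "i \<in> vertices (TD 4)"
  thus "(\<Sum>j\<in>vertices (TD 4). cartan (TD 4) i j * ([1,1,2,1,1] :: int list) ! j) = 0"
    by (simp only: V_D4 insert_iff empty_iff, elim disjE; simp add: cartan_def kac_def simple_edge_def V_D4)
next
  fix i :: nat assume i: "i \<in> vertices (TD 4)"
  show "(\<lambda>a b. a \<in> vertices (TD 4) \<and> b \<in> vertices (TD 4) \<and> cartan (TD 4) a b \<noteq> 0)\<^sup>*\<^sup>* 0 i"
    by (rule conn_parent[OF i, where par = "\<lambda>i. ([0,2,0,2,2] :: nat list) ! i" and r = "\<lambda>i. ([0,2,1,2,2] :: nat list) ! i"])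
       (simp only: V_D4 insert_iff empty_iff, elim disjE; simp add: cartan_def kac_def simple_edge_def V_D4 vertices_def)
qed (auto simp: V_D4)

lemma V_E6: "vertices (TE6) = {0,1,2,3,4,5,6}" by (auto simp: vertices_def)

lemma good_E6: "good (TE6) (\<lambda>i. ([1,1,2,2,3,2,1] :: int list) ! i) (\<lambda>_. 1)"
proof (unfold_locales)
  fix i j :: nat assume "i \<noteq> j" thus "cartan (TE6) i j \<le> 0" by (rule offdiag_all)
next
  fix i k :: nat assume "i \<in> vertices (TE6)" "k \<in> vertices (TE6)"
  thus "1 * real_of_int (cartan (TE6) i k) = 1 * real_of_int (cartan (TE6) k i)"
    by (simp only: V_E6 insert_iff empty_iff, elim disjE; simp add: cartan_def kac_def simple_edge_def V_E6)
next
  fix i :: nat assume "i \<in> vertices (TE6)"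
  thus "0 < ([1,1,2,2,3,2,1] :: int list) ! i"
    by (simp only: V_E6 insert_iff empty_iff, elim disjE; simp)
next
  fix i :: nat assume "i \<in> vertices (TE6)"
  thus "(\<Sum>j\<in>vertices (TE6). cartan (TE6) i j * ([1,1,2,2,3,2,1] :: int list) ! j) = 0"
    by (simp only: V_E6 insert_iff empty_iff, elim disjE; simp add: cartan_def kac_def simple_edge_def V_E6)
next
  fix i :: nat assume i: "i \<in> vertices (TE6)"
  show "(\<lambda>a b. a \<in> vertices (TE6) \<and> b \<in> vertices (TE6) \<and> cartan (TE6) a b \<noteq> 0)\<^sup>*\<^sup>* 0 i"
    by (rule conn_parent[OF i, where par = "\<lambda>i. ([0,3,0,4,2,4,5] :: nat list) ! i" and r = "\<lambda>i. ([0,4,1,3,2,3,4] :: nat list) ! i"])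
       (simp only: V_E6 insert_iff empty_iff, elim disjE; simp add: cartan_def kac_def simple_edge_def V_E6 vertices_def)
qed (auto simp: V_E6)

lemma V_E7: "vertices (TE7) = {0,1,2,3,4,5,6,7}" by (auto simp: vertices_def)

lemma good_E7: "good (TE7) (\<lambda>i. ([1,2,2,3,4,3,2,1] :: int list) ! i) (\<lambda>_. 1)"
proof (unfold_locales)
  fix i j :: nat assume "i \<noteq> j" thus "cartan (TE7) i j \<le> 0" by (rule offdiag_all)
next
  fix i k :: nat assume "i \<in> vertices (TE7)" "k \<in> vertices (TE7)"
  thus "1 * real_of_int (cartan (TE7) i k) = 1 * real_of_int (cartan (TE7) k i)"
    by (simp only: V_E7 insert_iff empty_iff, elim disjE; simp add: cartan_def kac_def simple_edge_def V_E7)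
next
  fix i :: nat assume "i \<in> vertices (TE7)"
  thus "0 < ([1,2,2,3,4,3,2,1] :: int list) ! i"
    by (simp only: V_E7 insert_iff empty_iff, elim disjE; simp)
next
  fix i :: nat assume "i \<in> vertices (TE7)"
  thus "(\<Sum>j\<in>vertices (TE7). cartan (TE7) i j * ([1,2,2,3,4,3,2,1] :: int list) ! j) = 0"
    by (simp only: V_E7 insert_iff empty_iff, elim disjE; simp add: cartan_def kac_def simple_edge_def V_E7)
next
  fix i :: nat assume i: "i \<in> vertices (TE7)"
  show "(\<lambda>a b. a \<in> vertices (TE7) \<and> b \<in> vertices (TE7) \<and> cartan (TE7) a b \<noteq> 0)\<^sup>*\<^sup>* 0 i"
    by (rule conn_parent[OF i, where par = "\<lambda>i. ([0,0,4,1,3,4,5,6] :: nat list) ! i" and r = "\<lambda>i. ([0,1,4,2,3,4,5,6] :: nat list) ! i"])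
       (simp only: V_E7 insert_iff empty_iff, elim disjE; simp add: cartan_def kac_def simple_edge_def V_E7 vertices_def)
qed (auto simp: V_E7)

lemma V_E8: "vertices (TE8) = {0,1,2,3,4,5,6,7,8}" by (auto simp: vertices_def)

lemma good_E8: "good (TE8) (\<lambda>i. ([1,2,3,4,6,5,4,3,2] :: int list) ! i) (\<lambda>_. 1)"
proof (unfold_locales)
  fix i j :: nat assume "i \<noteq> j" thus "cartan (TE8) i j \<le> 0" by (rule offdiag_all)
next
  fix i k :: nat assume "i \<in> vertices (TE8)" "k \<in> vertices (TE8)"
  thus "1 * real_of_int (cartan (TE8) i k) = 1 * real_of_int (cartan (TE8) k i)"
    by (simp only: V_E8 insert_iff empty_iff, elim disjE; simp add: cartan_def kac_def simple_edge_def V_E8)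
next
  fix i :: nat assume "i \<in> vertices (TE8)"
  thus "0 < ([1,2,3,4,6,5,4,3,2] :: int list) ! i"
    by (simp only: V_E8 insert_iff empty_iff, elim disjE; simp)
next
  fix i :: nat assume "i \<in> vertices (TE8)"
  thus "(\<Sum>j\<in>vertices (TE8). cartan (TE8) i j * ([1,2,3,4,6,5,4,3,2] :: int list) ! j) = 0"
    by (simp only: V_E8 insert_iff empty_iff, elim disjE; simp add: cartan_def kac_def simple_edge_def V_E8)
next
  fix i :: nat assume i: "i \<in> vertices (TE8)"
  show "(\<lambda>a b. a \<in> vertices (TE8) \<and> b \<in> vertices (TE8) \<and> cartan (TE8) a b \<noteq> 0)\<^sup>*\<^sup>* 0 i"
    by (rule conn_parent[OF i, where par = "\<lambda>i. ([0,3,4,4,5,6,7,8,0] :: nat list) ! i" and r = "\<lambda>i. ([0,7,6,6,5,4,3,2,1] :: nat list) ! i"])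
       (simp only: V_E8 insert_iff empty_iff, elim disjE; simp add: cartan_def kac_def simple_edge_def V_E8 vertices_def)
qed (auto simp: V_E8)

lemma V_F4: "vertices (TF4) = {0,1,2,3,4}" by (auto simp: vertices_def)

lemma good_F4: "good (TF4) (\<lambda>i. ([1,2,3,2,1] :: int list) ! i) (\<lambda>i. ([2,2,2,1,1] :: real list) ! i)"
proof (unfold_locales)
  fix i j :: nat assume "i \<noteq> j" thus "cartan (TF4) i j \<le> 0" by (rule offdiag_all)
next
  fix i k :: nat assume "i \<in> vertices (TF4)" "k \<in> vertices (TF4)"
  thus "([2,2,2,1,1] :: real list) ! k * real_of_int (cartan (TF4) i k) = ([2,2,2,1,1] :: real list) ! i * real_of_int (cartan (TF4) k i)"
    by (simp only: V_F4 insert_iff empty_iff, elim disjE; simp add: cartan_def kac_def simple_edge_def V_F4)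
next
  fix i :: nat assume "i \<in> vertices (TF4)"
  thus "0 < ([1,2,3,2,1] :: int list) ! i"
    by (simp only: V_F4 insert_iff empty_iff, elim disjE; simp)
next
  fix i :: nat assume "i \<in> vertices (TF4)"
  thus "(\<Sum>j\<in>vertices (TF4). cartan (TF4) i j * ([1,2,3,2,1] :: int list) ! j) = 0"
    by (simp only: V_F4 insert_iff empty_iff, elim disjE; simp add: cartan_def kac_def simple_edge_def V_F4)
next
  fix i :: nat assume i: "i \<in> vertices (TF4)"
  show "(\<lambda>a b. a \<in> vertices (TF4) \<and> b \<in> vertices (TF4) \<and> cartan (TF4) a b \<noteq> 0)\<^sup>*\<^sup>* 0 i"
    by (rule conn_parent[OF i, where par = "\<lambda>i. ([0,0,1,2,3] :: nat list) ! i" and r = "\<lambda>i. ([0,1,2,3,4] :: nat list) ! i"])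
       (simp only: V_F4 insert_iff empty_iff, elim disjE; simp add: cartan_def kac_def simple_edge_def V_F4 vertices_def)
qed (auto simp: V_F4)

lemma V_G2: "vertices (TG2) = {0,1,2}" by (auto simp: vertices_def)

lemma good_G2: "good (TG2) (\<lambda>i. ([1,1,2] :: int list) ! i) (\<lambda>i. ([3,1,3] :: real list) ! i)"
proof (unfold_locales)
  fix i j :: nat assume "i \<noteq> j" thus "cartan (TG2) i j \<le> 0" by (rule offdiag_all)
next
  fix i k :: nat assume "i \<in> vertices (TG2)" "k \<in> vertices (TG2)"
  thus "([3,1,3] :: real list) ! k * real_of_int (cartan (TG2) i k) = ([3,1,3] :: real list) ! i * real_of_int (cartan (TG2) k i)"
    by (simp only: V_G2 insert_iff empty_iff, elim disjE; simp add: cartan_def kac_def simple_edge_def V_G2)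
next
  fix i :: nat assume "i \<in> vertices (TG2)"
  thus "0 < ([1,1,2] :: int list) ! i"
    by (simp only: V_G2 insert_iff empty_iff, elim disjE; simp)
next
  fix i :: nat assume "i \<in> vertices (TG2)"
  thus "(\<Sum>j\<in>vertices (TG2). cartan (TG2) i j * ([1,1,2] :: int list) ! j) = 0"
    by (simp only: V_G2 insert_iff empty_iff, elim disjE; simp add: cartan_def kac_def simple_edge_def V_G2)
next
  fix i :: nat assume i: "i \<in> vertices (TG2)"
  show "(\<lambda>a b. a \<in> vertices (TG2) \<and> b \<in> vertices (TG2) \<and> cartan (TG2) a b \<noteq> 0)\<^sup>*\<^sup>* 0 i"
    by (rule conn_parent[OF i, where par = "\<lambda>i. ([0,2,0] :: nat list) ! i" and r = "\<lambda>i. ([0,2,1] :: nat list) ! i"])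
       (simp only: V_G2 insert_iff empty_iff, elim disjE; simp add: cartan_def kac_def simple_edge_def V_G2 vertices_def)
qed (auto simp: V_G2)



lemma good_exists: "valid_type T \<Longrightarrow> \<exists>dI \<eta>. good T dI \<eta>"
proof (cases T)
  case (TA n)
  assume v: "valid_type T"
  show ?thesis
  proof (cases "n = 1")
    case True thus ?thesis using good_A1 TA by blast
  next
    case False
    hence "n = Suc (Suc (n - 2))" using v TA by simp
    then obtain m where "n = Suc (Suc m)" by blast
    thus ?thesis using good_A TA by blast
  qed
next
  case (TB n)
  assume v: "valid_type T"
  show ?thesis
  proof (cases "n = 3")
    case True thus ?thesis using good_B3 TB by blast
  next
    case False
    hence "n \<ge> 4" using v TB by simp
    hence "n = Suc (Suc (Suc (Suc (n - 4))))" by simp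
    then obtain m where "n = Suc (Suc (Suc (Suc m)))" by blast
    thus ?thesis using good_B TB by blast
  qed
next
  case (TC n)
  assume v: "valid_type T"
  hence "n \<ge> 2" using TC by simp
  hence "n = Suc (Suc (n - 2))" by simp
  then obtain m where "n = Suc (Suc m)" by blast
  thus ?thesis using good_C TC by blast
next
  case (TD n)
  assume v: "valid_type T"
  show ?thesis
  proof (cases "n = 4")
    case True thus ?thesis using good_D4 TD by blast
  next
    case False
    hence "n \<ge> 5" using v TD by simp
    hence "n = Suc (Suc (Suc (Suc (Suc (n - 5)))))" by simp
    then obtain m where "n = Suc (Suc (Suc (Suc (Suc m))))" by blast
    thus ?thesis using good_D TD by blast
  qed
qed (use good_E6 good_E7 good_E8 good_F4 good_G2 in blast)+

theorem theorem3p1: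
  fixes T :: affine_type and v :: "nat \<Rightarrow> real"
  assumes "valid_type T"
    and "delta_dot T v = 0"
  shows "(\<forall>g \<in> lists (vertices T). game_reach T v (weyl_act T g v))
         \<and> (\<forall>w. game_reach T v w \<longrightarrow> game_reach T w v)"
proof -
  obtain dI \<eta> where "good T dI \<eta>" using good_exists[OF assms(1)] by blast
  thus ?thesis using good.main assms(2) by blast
qed

end
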